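(* Let $(M^{4n},g)$ be a quaternionic Kähler manifold and $r$ an integer with $n+2r\geq 0$. The Chern character of $\mathrm{Sym}^{n+2r}H$ is $$\mathrm{ch}\,\mathrm{Sym}^{n+2r}H\;=\;\sum_{l\geq 0}\frac{2^{2l+1}}{(2l+1)!}\,B_{2l+1}\!\left(r+\frac{n+2}{2}\right)u^l,$$ where $u:=p_1(H)$ and $B_{2l+1}(x)$ is the $(2l+1)$-th Bernoulli polynomial.
   Context: A quaternionic Kähler manifold is a Riemannian $4n$-manifold with holonomy in $\mathbf{Sp}(1)\cdot\mathbf{Sp}(n)$; $H$ is the (locally defined) rank-2 bundle associated to the standard representation of $\mathbf{Sp}(1)$. Characteristic classes are computed formally via the splitting principle: $H=\ell\oplus\ell^{-1}$ with $c_1(\ell)=\pm\sqrt{u}$, i.e. $u=p_1(H)=c_1(\ell)^2$; equivalently $4u=p_1(\mathrm{Sym}^2H)$, which is a globally defined class. Bernoulli polynomials are characterized by $B_{\mu+1}(w+1)-B_{\mu+1}(w)=(\mu+1)w^\mu$ together with the standard normalization $B_k(x)=x^k-\frac12\binom k1x^{k-1}+\frac16\binom k2x^{k-2}-\dots$. *)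

theory Defs
  imports Complex_Main "HOL-Computational_Algebra.Formal_Power_Series"
begin

text \<open>Bernoulli numbers with the standard normalisation B_1 = -1/2:
  B_0 = 1 and sum over k < n+1 of (n+1 choose k) B_k = 0 for n \<ge> 1.\<close>
function bernoulli :: "nat \<Rightarrow> real" where
  "bernoulli n = (if n = 0 then 1
     else - (\<Sum>k<n. real ((n + 1) choose k) * bernoulli k) / real (n + 1))"
  by auto
termination by (relation "measure id") auto

definition bernpoly :: "nat \<Rightarrow> real \<Rightarrow> real" where
  "bernpoly n x = (\<Sum>k\<le>n. real (n choose k) * bernoulli k * x ^ (n - k))"

text \<open>Splitting principle: H = L + L^(-1), x = c_1(L) (formal variable fps_X).
  Then Sym^k H = sum over j = 0..k of L^(k-2j), so its Chern character, as a
  formal power series in x, is the sum of exp((k-2j) x).\<close>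
definition ch_Sym_H :: "nat \<Rightarrow> real fps" where
  "ch_Sym_H k = (\<Sum>j\<le>k. fps_exp (real_of_int (int k - 2 * int j)))"

text \<open>u = p_1(H) = x^2.\<close>
definition u_class :: "real fps" where
  "u_class = fps_X ^ 2"

end

theory Submission
  imports Defs
begin

declare bernoulli.simps [simp del]

lemma bern_rec:
  assumes "m \<ge> 1"
  shows "(\<Sum>k<Suc m. real (Suc m choose k) * bernoulli k) = 0"
proof -
  have "bernoulli m = - (\<Sum>k<m. real ((m + 1) choose k) * bernoulli k) / real (m + 1)"
    using assms by (subst bernoulli.simps) simp
  hence "real (m+1) * bernoulli m = - (\<Sum>k<m. real ((m + 1) choose k) * bernoulli k)"
    by (simp add: field_simps)
  thus ?thesis by simp
qed

definition BE :: "real fps" where "BE = Abs_fps (\<lambda>k. bernoulli k / fact k)"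

lemma BE_eq: "BE * (fps_exp 1 - 1) = fps_X"
proof (rule fps_ext)
  fix n
  show "fps_nth (BE * (fps_exp 1 - 1)) n = fps_nth fps_X n"
  proof (cases n)
    case 0 thus ?thesis by (simp add: BE_def)
  next
    case (Suc m)
    have "fps_nth (BE * (fps_exp 1 - 1)) n = (\<Sum>i=0..Suc m. bernoulli i / fact i * (if Suc m - i = 0 then 0 else 1 / fact (Suc m - i)))"
      unfolding Suc fps_mult_nth by (intro sum.cong) (auto simp: BE_def)
    also have "\<dots> = (\<Sum>i<Suc m. bernoulli i / fact i * (1 / fact (Suc m - i)))"
      by (simp add: atLeast0AtMost sum.atMost_Suc lessThan_Suc_atMost mult_ac)
    also have "\<dots> = (\<Sum>i<Suc m. real (Suc m choose i) * bernoulli i) / fact (Suc m)"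
      unfolding sum_divide_distrib
    proof (rule sum.cong[OF refl])
      fix i assume "i \<in> {..<Suc m}"
      hence "i \<le> Suc m" by simp
      show "bernoulli i / fact i * (1 / fact (Suc m - i)) = real (Suc m choose i) * bernoulli i / fact (Suc m)"
        by (subst binomial_fact[OF \<open>i \<le> Suc m\<close>]) (simp add: field_simps del: fact_Suc)
    qed
    finally have *: "fps_nth (BE * (fps_exp 1 - 1)) n = (\<Sum>i<Suc m. real (Suc m choose i) * bernoulli i) / fact (Suc m)" .
    show ?thesis
    proof (cases m)
      case 0 thus ?thesis using * Suc by (simp add: bernoulli.simps)
    next
      case (Suc p) thus ?thesis using * \<open>n = Suc m\<close> bern_rec[of m] by simp
    qed
  qed
qed

lemma BP_gen: "Abs_fps (\<lambda>n. bernpoly n x / fact n) = BE * fps_exp x"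
proof (rule fps_ext)
  fix n
  have "fps_nth (BE * fps_exp x) n = (\<Sum>i\<le>n. bernoulli i / fact i * (x ^ (n - i) / fact (n - i)))"
    unfolding fps_mult_nth atLeast0AtMost by (simp add: BE_def)
  also have "\<dots> = (\<Sum>i\<le>n. real (n choose i) * bernoulli i * x ^ (n - i)) / fact n"
    unfolding sum_divide_distrib
  proof (rule sum.cong[OF refl])
    fix i assume "i \<in> {..n}"
    hence "i \<le> n" by simp
    show "bernoulli i / fact i * (x ^ (n - i) / fact (n - i)) = real (n choose i) * bernoulli i * x ^ (n - i) / fact n"
      by (subst binomial_fact[OF \<open>i \<le> n\<close>]) (simp add: field_simps)
  qed
  finally show "fps_nth (Abs_fps (\<lambda>n. bernpoly n x / fact n)) n = fps_nth (BE * fps_exp x) n"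
    by (simp add: bernpoly_def)
qed

lemma bernpoly_diff: "bernpoly (Suc m) (x + 1) - bernpoly (Suc m) x = real (Suc m) * x ^ m"
proof -
  have "Abs_fps (\<lambda>n. bernpoly n (x+1) / fact n) - Abs_fps (\<lambda>n. bernpoly n x / fact n)
        = BE * (fps_exp 1 - 1) * fps_exp x"
    unfolding BP_gen by (simp add: fps_exp_add_mult algebra_simps)
  also have "\<dots> = fps_X * fps_exp x" by (simp add: BE_eq)
  finally have "fps_nth (Abs_fps (\<lambda>n. bernpoly n (x+1) / fact n) - Abs_fps (\<lambda>n. bernpoly n x / fact n)) (Suc m)
     = fps_nth (fps_X * fps_exp x) (Suc m)" by simp
  hence "bernpoly (Suc m) (x+1) / fact (Suc m) - bernpoly (Suc m) x / fact (Suc m) = x ^ m / fact m"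
    by simp
  hence "(bernpoly (Suc m) (x+1) - bernpoly (Suc m) x) / fact (Suc m) = x ^ m / fact m"
    by (simp add: diff_divide_distrib)
  hence "fact m * bernpoly (Suc m) (x+1) = fact m * (bernpoly (Suc m) x + real (Suc m) * x ^ m)"
    by (simp add: field_simps del: of_nat_Suc)
  hence "bernpoly (Suc m) (x+1) = bernpoly (Suc m) x + real (Suc m) * x ^ m"
    using fact_nonzero[of m, where ?'a=real] by (simp only: mult_cancel_left) simp
  thus ?thesis by simp
qed

definition twist :: "real fps \<Rightarrow> real fps" where
  "twist f = Abs_fps (\<lambda>n. (-1) ^ n * fps_nth f n)"

lemma twist_mult: "twist (f * g) = twist f * twist g"
proof (rule fps_ext)
  fix n
  show "fps_nth (twist (f * g)) n = fps_nth (twist f * twist g) n"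
    unfolding twist_def fps_mult_nth fps_nth_Abs_fps sum_distrib_left
  proof (rule sum.cong[OF refl])
    fix i assume "i \<in> {0..n}"
    hence "(-1::real) ^ n = (-1) ^ i * (-1) ^ (n - i)"
      by (simp add: power_add[symmetric])
    thus "(-1) ^ n * (fps_nth f i * fps_nth g (n - i)) = (-1) ^ i * fps_nth f i * ((-1) ^ (n - i) * fps_nth g (n - i))"
      by simp
  qed
qed

lemma twist_diff: "twist (f - g) = twist f - twist g"
  by (rule fps_ext) (simp add: twist_def algebra_simps)

lemma twist_exp: "twist (fps_exp c) = fps_exp (- c)"
  by (rule fps_ext) (simp add: twist_def power_minus')

lemma twist_one: "twist 1 = 1"
  by (rule fps_ext) (simp add: twist_def)

lemma twist_X: "twist fps_X = - fps_X"
  by (rule fps_ext) (simp add: twist_def)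

lemma twist_BE: "twist BE = BE * fps_exp 1"
proof -
  have e: "fps_exp (-1) * fps_exp 1 = (1::real fps)"
    by (simp add: fps_exp_add_mult[symmetric])
  have "twist BE * (fps_exp (-1) - 1) = - fps_X"
    using arg_cong[OF BE_eq, of twist] by (simp add: twist_mult twist_diff twist_exp twist_one twist_X)
  hence h1: "twist BE * (fps_exp (-1) - 1) * fps_exp 1 = - fps_X * fps_exp 1" by simp
  have h2: "twist BE * (fps_exp (-1) - 1) * fps_exp 1 = twist BE - twist BE * fps_exp 1"
    by (simp only: left_diff_distrib right_diff_distrib mult.assoc e mult_1_left mult_1_right)
  from h1 h2 have "twist BE - twist BE * fps_exp 1 = - fps_X * fps_exp 1" by simp
  hence "twist BE * (fps_exp 1 - 1) = fps_X * fps_exp 1"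
    by (simp add: right_diff_distrib) (metis minus_diff_eq minus_minus)
  also have "\<dots> = BE * fps_exp 1 * (fps_exp 1 - 1)"
    using BE_eq by (simp add: algebra_simps)
  finally have *: "twist BE * (fps_exp 1 - 1) = BE * fps_exp 1 * (fps_exp 1 - 1)" .
  have "fps_exp 1 - 1 \<noteq> (0::real fps)"
  proof
    assume "fps_exp 1 - 1 = (0::real fps)"
    hence "fps_nth (fps_exp 1 - 1) 1 = fps_nth (0::real fps) 1" by simp
    thus False by simp
  qed
  with * show ?thesis by simp
qed

lemma bernpoly_refl: "bernpoly n (1 - x) = (-1) ^ n * bernpoly n x"
proof -
  have "twist (Abs_fps (\<lambda>n. bernpoly n x / fact n)) = Abs_fps (\<lambda>n. bernpoly n (1 - x) / fact n)"
    unfolding BP_gen twist_mult twist_BE twist_exp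
    by (simp add: fps_exp_add_mult[symmetric] mult.assoc)
  hence "fps_nth (twist (Abs_fps (\<lambda>n. bernpoly n x / fact n))) n = fps_nth (Abs_fps (\<lambda>n. bernpoly n (1 - x) / fact n)) n"
    by simp
  hence "(-1) ^ n * (bernpoly n x / fact n) = bernpoly n (1 - x) / fact n"
    by (simp add: twist_def)
  thus ?thesis by (simp add: field_simps)
qed

lemma tele: "real (Suc m) * (\<Sum>j\<le>k. (y + real j) ^ m) = bernpoly (Suc m) (y + real k + 1) - bernpoly (Suc m) y"
proof (induction k)
  case 0 thus ?case using bernpoly_diff[of m y] by simp
next
  case (Suc k)
  have "real (Suc m) * (\<Sum>j\<le>Suc k. (y + real j) ^ m) = real (Suc m) * (\<Sum>j\<le>k. (y + real j) ^ m) + real (Suc m) * (y + real (Suc k)) ^ m"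
    by (simp add: algebra_simps)
  also have "\<dots> = bernpoly (Suc m) (y + real k + 1) - bernpoly (Suc m) y + (bernpoly (Suc m) (y + real (Suc k) + 1) - bernpoly (Suc m) (y + real (Suc k)))"
    using Suc.IH bernpoly_diff[of m "y + real (Suc k)"] by simp
  finally show ?case by (simp add: algebra_simps)
qed

lemma compose_X2: "fps_nth (fps_compose a (fps_X ^ 2)) m = (if even m then fps_nth a (m div 2) else 0)"
proof -
  have "fps_nth (fps_compose a (fps_X ^ 2)) m = (\<Sum>i=0..m. (if i = m div 2 \<and> even m then fps_nth a i else 0))"
    unfolding fps_compose_nth power_mult[symmetric] fps_X_power_nth
    by (intro sum.cong refl) auto
  also have "\<dots> = (if even m then fps_nth a (m div 2) else 0)"
    by (cases "even m") (simp_all add: sum.delta')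
  finally show ?thesis .
qed

lemma odd_sum: assumes "odd m" shows "(\<Sum>j\<le>k. (real k - 2 * real j) ^ m) = 0"
proof -
  have "(\<Sum>j\<le>k. (real k - 2 * real j) ^ m) = (\<Sum>j=0..k. (real k - 2 * real (k + 0 - j)) ^ m)"
    unfolding atLeast0AtMost[symmetric] by (rule sum.atLeastAtMost_rev)
  also have "\<dots> = (\<Sum>j=0..k. - ((real k - 2 * real j) ^ m))"
  proof (rule sum.cong[OF refl])
    fix j assume "j \<in> {0..k}"
    hence "real k - 2 * real (k + 0 - j) = - (real k - 2 * real j)" by (simp add: of_nat_diff)
    thus "(real k - 2 * real (k + 0 - j)) ^ m = - ((real k - 2 * real j) ^ m)"
      by (simp only: power_minus_odd[OF assms])
  qed
  also have "\<dots> = - (\<Sum>j\<le>k. (real k - 2 * real j) ^ m)"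
    by (simp add: sum_negf atLeast0AtMost)
  finally show ?thesis by simp
qed

lemma even_sum: "real (Suc (2*l)) * (\<Sum>j\<le>k. (real k - 2 * real j) ^ (2*l)) = 2 ^ (2*l+1) * bernpoly (Suc (2*l)) ((real k + 2) / 2)"
proof -
  have "(\<Sum>j\<le>k. (real k - 2 * real j) ^ (2*l)) = (\<Sum>j\<le>k. 2 ^ (2*l) * (- (real k / 2) + real j) ^ (2*l))"
  proof (rule sum.cong[OF refl])
    fix j
    have "real k - 2 * real j = (-2) * (- (real k / 2) + real j)" by simp
    hence "(real k - 2 * real j) ^ (2*l) = (-2) ^ (2*l) * (- (real k / 2) + real j) ^ (2*l)"
      by (simp only: power_mult_distrib)
    thus "(real k - 2 * real j) ^ (2*l) = 2 ^ (2*l) * (- (real k / 2) + real j) ^ (2*l)"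
      by simp
  qed
  hence "real (Suc (2*l)) * (\<Sum>j\<le>k. (real k - 2 * real j) ^ (2*l))
      = 2 ^ (2*l) * (real (Suc (2*l)) * (\<Sum>j\<le>k. (- (real k / 2) + real j) ^ (2*l)))"
    by (simp add: sum_distrib_left[symmetric] mult_ac)
  also have "\<dots> = 2 ^ (2*l) * (bernpoly (Suc (2*l)) (- (real k / 2) + real k + 1) - bernpoly (Suc (2*l)) (- (real k / 2)))"
    by (simp only: tele)
  also have "- (real k / 2) + real k + 1 = (real k + 2) / 2" by simp
  also have "- (real k / 2) = 1 - (real k + 2) / 2" by (simp add: field_simps)
  also have "bernpoly (Suc (2*l)) (1 - (real k + 2) / 2) = - bernpoly (Suc (2*l)) ((real k + 2) / 2)"
    by (simp add: bernpoly_refl)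
  finally show ?thesis by simp
qed

theorem lemma2p1:
  fixes n :: nat and r :: int
  assumes "int n + 2 * r \<ge> 0"
  shows "ch_Sym_H (nat (int n + 2 * r)) =
    fps_compose
      (Abs_fps (\<lambda>l. 2 ^ (2 * l + 1) / fact (2 * l + 1)
                     * bernpoly (2 * l + 1) (real_of_int r + (real n + 2) / 2)))
      u_class"
proof -
  define k where "k = nat (int n + 2 * r)"
  have kr: "real k = real n + 2 * real_of_int r" using assms by (simp add: k_def)
  have w: "real_of_int r + (real n + 2) / 2 = (real k + 2) / 2" using kr by simp
  show ?thesis
    unfolding k_def[symmetric] w
  proof (rule fps_ext)
    fix m
    have L: "fps_nth (ch_Sym_H k) m = (\<Sum>j\<le>k. (real k - 2 * real j) ^ m) / fact m"
      unfolding ch_Sym_H_def fps_sum_nth fps_exp_nth sum_divide_distrib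
      by (intro sum.cong refl) simp
    show "fps_nth (ch_Sym_H k) m = fps_nth (fps_compose
      (Abs_fps (\<lambda>l. 2 ^ (2 * l + 1) / fact (2 * l + 1)
                     * bernpoly (2 * l + 1) ((real k + 2) / 2))) u_class) m"
    proof (cases "even m")
      case False thus ?thesis unfolding L u_class_def compose_X2 by (simp add: odd_sum)
    next
      case True
      then obtain l where m: "m = 2 * l" by blast
      have S: "(\<Sum>j\<le>k. (real k - 2 * real j) ^ (2*l)) = 2 ^ (2*l+1) * bernpoly (Suc (2*l)) ((real k + 2) / 2) / real (Suc (2*l))"
        using even_sum[of l k] by (simp add: field_simps del: of_nat_Suc)
      have "fps_nth (ch_Sym_H k) m = 2 ^ (2*l+1) * bernpoly (Suc (2*l)) ((real k + 2) / 2) / (real (Suc (2*l)) * fact (2*l))"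
        unfolding L unfolding m S by simp
      also have "\<dots> = 2 ^ (2*l+1) / fact (2*l+1) * bernpoly (2*l+1) ((real k + 2) / 2)"
        by (simp add: fact_Suc mult_ac)
      finally show ?thesis unfolding u_class_def compose_X2 using True m by simp
    qed
  qed
qed

end
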